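(* Let $T\in B(H)$ with $T\ge0$, and let $(\lambda_k)_{k=1}^\infty\subset\operatorname{Int}_{\mathbb R}W_{\rm e}(T)$ with $(\lambda_k)_{k=1}^\infty\in\mathcal D(T)$. Then $\sum_{k=1}^\infty\lambda_k=\infty$.
   Context: $H$ is an infinite-dimensional complex separable Hilbert space. $W_{\rm e}(T)$ is the set of $\lambda\in\mathbb C$ with $\langle Tx_k,x_k\rangle\to\lambda$ for some orthonormal sequence $(x_k)$ (a subset of $\mathbb R$ for selfadjoint $T$); $\operatorname{Int}_{\mathbb R}$ is interior in $\mathbb R$. $\mathcal D(T)$ is the set of sequences $(\langle Tu_k,u_k\rangle)_{k\ge1}$ over orthonormal bases $(u_k)$ of $H$. *)

theory Defs
  imports "HOL-Analysis.Analysis"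
begin

text \<open>Model of the Hilbert space H: every infinite-dimensional complex separable
Hilbert space is unitarily isomorphic to l2(N), so we work on the concrete space
of square-summable complex sequences.\<close>

definition l2 :: "(nat \<Rightarrow> complex) set" where
  "l2 = {x. summable (\<lambda>n. (cmod (x n))\<^sup>2)}"

definition l2_inner :: "(nat \<Rightarrow> complex) \<Rightarrow> (nat \<Rightarrow> complex) \<Rightarrow> complex" where
  "l2_inner x y = (\<Sum>n. x n * cnj (y n))"

definition l2_norm :: "(nat \<Rightarrow> complex) \<Rightarrow> real" where
  "l2_norm x = sqrt (\<Sum>n. (cmod (x n))\<^sup>2)"

text \<open>T in B(H): a bounded linear operator on l2 (values outside l2 are irrelevant).\<close>
definition bounded_op :: "((nat \<Rightarrow> complex) \<Rightarrow> (nat \<Rightarrow> complex)) \<Rightarrow> bool" where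
  "bounded_op T \<longleftrightarrow>
     (\<forall>x\<in>l2. T x \<in> l2) \<and>
     (\<forall>x\<in>l2. \<forall>y\<in>l2. T (\<lambda>n. x n + y n) = (\<lambda>n. T x n + T y n)) \<and>
     (\<forall>x\<in>l2. \<forall>c. T (\<lambda>n. c * x n) = (\<lambda>n. c * T x n)) \<and>
     (\<exists>C. \<forall>x\<in>l2. l2_norm (T x) \<le> C * l2_norm x)"

definition positive_op :: "((nat \<Rightarrow> complex) \<Rightarrow> (nat \<Rightarrow> complex)) \<Rightarrow> bool" where
  "positive_op T \<longleftrightarrow> (\<forall>x\<in>l2. l2_inner (T x) x \<in> \<real> \<and> 0 \<le> Re (l2_inner (T x) x))"

definition l2_orthonormal :: "(nat \<Rightarrow> (nat \<Rightarrow> complex)) \<Rightarrow> bool" where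
  "l2_orthonormal u \<longleftrightarrow> (\<forall>k. u k \<in> l2) \<and>
     (\<forall>j k. l2_inner (u j) (u k) = (if j = k then 1 else 0))"

definition l2_onb :: "(nat \<Rightarrow> (nat \<Rightarrow> complex)) \<Rightarrow> bool" where
  "l2_onb u \<longleftrightarrow> l2_orthonormal u \<and>
     (\<forall>x\<in>l2. (\<forall>k. l2_inner x (u k) = 0) \<longrightarrow> x = (\<lambda>n. 0))"

definition ess_num_range :: "((nat \<Rightarrow> complex) \<Rightarrow> (nat \<Rightarrow> complex)) \<Rightarrow> complex set" where
  "ess_num_range T = {z. \<exists>x. l2_orthonormal x \<and>
      (\<lambda>k. l2_inner (T (x k)) (x k)) \<longlonglongrightarrow> z}"

definition diagonals :: "((nat \<Rightarrow> complex) \<Rightarrow> (nat \<Rightarrow> complex)) \<Rightarrow> (nat \<Rightarrow> complex) set" where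
  "diagonals T = {d. \<exists>u. l2_onb u \<and> d = (\<lambda>k. l2_inner (T (u k)) (u k))}"

end

theory Submission
  imports Defs
begin

lemma sq_prod_summable:
  fixes f g :: "nat \<Rightarrow> complex"
  assumes "summable (\<lambda>n. (cmod (f n))\<^sup>2)" "summable (\<lambda>n. (cmod (g n))\<^sup>2)"
  shows "summable (\<lambda>n. norm (f n * g n))"
proof (rule summable_comparison_test[where g="\<lambda>n. ((cmod (f n))\<^sup>2 + (cmod (g n))\<^sup>2)/2"])
  show "\<exists>N. \<forall>n\<ge>N. norm (norm (f n * g n)) \<le> ((cmod (f n))\<^sup>2 + (cmod (g n))\<^sup>2) / 2"
  proof (intro exI allI impI)
    fix n
    have "0 \<le> (cmod (f n) - cmod (g n))\<^sup>2" by simp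
    then show "norm (norm (f n * g n)) \<le> ((cmod (f n))\<^sup>2 + (cmod (g n))\<^sup>2) / 2"
      by (simp add: norm_mult power2_eq_square algebra_simps)
  qed
  show "summable (\<lambda>n. ((cmod (f n))\<^sup>2 + (cmod (g n))\<^sup>2) / 2)"
    using assms by (intro summable_divide summable_add)
qed

lemma l2_summ_ip:
  assumes "x \<in> l2" "y \<in> l2"
  shows "summable (\<lambda>n. x n * cnj (y n))"
proof -
  have "summable (\<lambda>n. norm (x n * cnj (y n)))"
    using assms by (intro sq_prod_summable) (auto simp: l2_def)
  then show ?thesis by (rule summable_norm_cancel)
qed

lemma l2_zero[simp]: "(\<lambda>n. 0) \<in> l2" by (simp add: l2_def)

lemma l2_add:
  assumes "x \<in> l2" "y \<in> l2" shows "(\<lambda>n. x n + y n) \<in> l2"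
proof -
  have "summable (\<lambda>n. 2 * (cmod (x n))\<^sup>2 + 2 * (cmod (y n))\<^sup>2)"
    using assms by (auto simp: l2_def intro!: summable_add summable_mult)
  moreover have "(cmod (x n + y n))\<^sup>2 \<le> 2 * (cmod (x n))\<^sup>2 + 2 * (cmod (y n))\<^sup>2" for n
  proof -
    have "cmod (x n + y n) \<le> cmod (x n) + cmod (y n)" by (rule norm_triangle_ineq)
    hence "(cmod (x n + y n))\<^sup>2 \<le> (cmod (x n) + cmod (y n))\<^sup>2"
      by (intro power_mono) auto
    also have "\<dots> \<le> 2 * (cmod (x n))\<^sup>2 + 2 * (cmod (y n))\<^sup>2"
      using sum_squares_ge_zero[of "cmod (x n) - cmod (y n)" 0]
      by (simp add: power2_eq_square algebra_simps)
    finally show ?thesis .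
  qed
  ultimately show ?thesis unfolding l2_def
    by (auto intro: summable_comparison_test[where g="\<lambda>n. 2 * (cmod (x n))\<^sup>2 + 2 * (cmod (y n))\<^sup>2"])
qed

lemma l2_scale:
  assumes "x \<in> l2" shows "(\<lambda>n. c * x n) \<in> l2"
  using assms by (auto simp: l2_def norm_mult power_mult_distrib intro!: summable_mult)

lemma l2_diff:
  assumes "x \<in> l2" "y \<in> l2" shows "(\<lambda>n. x n - y n) \<in> l2"
  using l2_add[OF assms(1) l2_scale[OF assms(2), of "-1"]] by simp

lemma l2_sum:
  assumes "finite A" "\<And>k. k \<in> A \<Longrightarrow> f k \<in> l2"
  shows "(\<lambda>n. \<Sum>k\<in>A. f k n) \<in> l2"
  using assms by (induction A rule: finite_induct) (auto intro: l2_add)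

lemma ip_add_left:
  assumes "a \<in> l2" "b \<in> l2" "c \<in> l2"
  shows "l2_inner (\<lambda>n. a n + b n) c = l2_inner a c + l2_inner b c"
  unfolding l2_inner_def using assms
  by (simp add: distrib_right suminf_add[symmetric] l2_summ_ip)

lemma ip_scale_left:
  assumes "a \<in> l2" "c \<in> l2"
  shows "l2_inner (\<lambda>n. s * a n) c = s * l2_inner a c"
  unfolding l2_inner_def using assms
  by (simp add: mult.assoc suminf_mult l2_summ_ip)

lemma ip_cnj:
  assumes "a \<in> l2" "c \<in> l2"
  shows "l2_inner c a = cnj (l2_inner a c)"
proof -
  have "(\<lambda>n. a n * cnj (c n)) sums l2_inner a c"
    unfolding l2_inner_def using l2_summ_ip[OF assms] by (rule summable_sums)
  hence "(\<lambda>n. cnj (a n * cnj (c n))) sums cnj (l2_inner a c)" by (subst sums_cnj)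
  hence "(\<lambda>n. c n * cnj (a n)) sums cnj (l2_inner a c)" by (simp add: mult.commute)
  thus ?thesis unfolding l2_inner_def by (rule sums_unique[symmetric])
qed

lemma ip_add_right:
  assumes "a \<in> l2" "b \<in> l2" "c \<in> l2"
  shows "l2_inner c (\<lambda>n. a n + b n) = l2_inner c a + l2_inner c b"
  using assms by (simp add: ip_cnj[of _ c] ip_add_left l2_add)

lemma ip_scale_right:
  assumes "a \<in> l2" "c \<in> l2"
  shows "l2_inner c (\<lambda>n. s * a n) = cnj s * l2_inner c a"
  using assms by (simp add: ip_cnj[of _ c] ip_scale_left l2_scale)

lemma ip_zero_left[simp]: "l2_inner (\<lambda>n. 0) c = 0" by (simp add: l2_inner_def)
lemma ip_zero_right[simp]: "l2_inner c (\<lambda>n. 0) = 0" by (simp add: l2_inner_def)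

lemma ip_diff_left:
  assumes "a \<in> l2" "b \<in> l2" "c \<in> l2"
  shows "l2_inner (\<lambda>n. a n - b n) c = l2_inner a c - l2_inner b c"
  using ip_add_left[OF assms(1) l2_scale[OF assms(2), of "-1"] assms(3)]
    ip_scale_left[OF assms(2,3), of "-1"] by simp

lemma ip_diff_right:
  assumes "a \<in> l2" "b \<in> l2" "c \<in> l2"
  shows "l2_inner c (\<lambda>n. a n - b n) = l2_inner c a - l2_inner c b"
  using assms by (simp add: ip_cnj[of _ c] ip_diff_left l2_diff)

lemma ip_sum_left:
  assumes "finite A" "\<And>k. k \<in> A \<Longrightarrow> f k \<in> l2" "c \<in> l2"
  shows "l2_inner (\<lambda>n. \<Sum>k\<in>A. f k n) c = (\<Sum>k\<in>A. l2_inner (f k) c)"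
  using assms
proof (induction A rule: finite_induct)
  case (insert x F)
  then show ?case by (simp add: ip_add_left l2_sum)
qed simp

lemma ip_sum_right:
  assumes "finite A" "\<And>k. k \<in> A \<Longrightarrow> f k \<in> l2" "c \<in> l2"
  shows "l2_inner c (\<lambda>n. \<Sum>k\<in>A. f k n) = (\<Sum>k\<in>A. l2_inner c (f k))"
  using assms by (simp add: ip_cnj[of _ c] ip_sum_left l2_sum)

lemma ip_self:
  assumes "a \<in> l2"
  shows "l2_inner a a = of_real (\<Sum>n. (cmod (a n))\<^sup>2)"
proof -
  have "(\<lambda>n. (cmod (a n))\<^sup>2) sums (\<Sum>n. (cmod (a n))\<^sup>2)"
    using assms by (auto simp: l2_def intro: summable_sums)
  hence "(\<lambda>n. complex_of_real ((cmod (a n))\<^sup>2)) sums of_real (\<Sum>n. (cmod (a n))\<^sup>2)"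
    by (rule sums_of_real)
  hence "(\<lambda>n. a n * cnj (a n)) sums of_real (\<Sum>n. (cmod (a n))\<^sup>2)"
    unfolding complex_norm_square .
  thus ?thesis unfolding l2_inner_def by (rule sums_unique[symmetric])
qed

lemma ip_self_nonneg:
  assumes "a \<in> l2"
  shows "0 \<le> Re (l2_inner a a)" "l2_inner a a = of_real (Re (l2_inner a a))"
  using assms by (auto simp: ip_self l2_def intro!: suminf_nonneg)


definition lin_pos :: "((nat \<Rightarrow> complex) \<Rightarrow> (nat \<Rightarrow> complex)) \<Rightarrow> bool" where
  "lin_pos T \<longleftrightarrow> (\<forall>x\<in>l2. T x \<in> l2) \<and>
     (\<forall>x\<in>l2. \<forall>y\<in>l2. T (\<lambda>n. x n + y n) = (\<lambda>n. T x n + T y n)) \<and>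
     (\<forall>x\<in>l2. \<forall>c. T (\<lambda>n. c * x n) = (\<lambda>n. c * T x n)) \<and>
     (\<forall>x\<in>l2. l2_inner (T x) x \<in> \<real> \<and> 0 \<le> Re (l2_inner (T x) x))"

lemma lin_pos_id: "lin_pos (\<lambda>x. x)"
  unfolding lin_pos_def using ip_self_nonneg
  by (metis Reals_of_real)

lemma lin_pos_T: "bounded_op T \<Longrightarrow> positive_op T \<Longrightarrow> lin_pos T"
  unfolding lin_pos_def bounded_op_def positive_op_def by blast

lemma form_expand:
  assumes "lin_pos T" "x \<in> l2" "y \<in> l2"
  shows "l2_inner (T (\<lambda>n. x n + s * y n)) (\<lambda>n. x n + s * y n) =
    l2_inner (T x) x + cnj s * l2_inner (T x) y + s * l2_inner (T y) x + s * cnj s * l2_inner (T y) y"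
proof -
  have Tx: "T x \<in> l2" and Ty: "T y \<in> l2" using assms unfolding lin_pos_def by auto
  have sy: "(\<lambda>n. s * y n) \<in> l2" using assms(3) by (rule l2_scale)
  have "T (\<lambda>n. x n + s * y n) = (\<lambda>n. T x n + s * T y n)"
    using assms sy unfolding lin_pos_def by auto
  moreover have Tsy: "(\<lambda>n. s * T y n) \<in> l2" using Ty by (rule l2_scale)
  ultimately show ?thesis
    using assms Tx Ty sy
    by (simp add: ip_add_left ip_add_right ip_scale_left ip_scale_right l2_add algebra_simps)
qed

lemma form_real:
  assumes "lin_pos T" "x \<in> l2"
  shows "l2_inner (T x) x = of_real (Re (l2_inner (T x) x))" "0 \<le> Re (l2_inner (T x) x)"
  using assms unfolding lin_pos_def by (auto simp: Reals_def)

lemma form_herm: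
  assumes "lin_pos T" "x \<in> l2" "y \<in> l2"
  shows "l2_inner (T y) x = cnj (l2_inner (T x) y)"
proof -
  have xs: "(\<lambda>n. x n + s * y n) \<in> l2" for s using assms by (intro l2_add l2_scale)
  have i1: "Im (l2_inner (T (\<lambda>n. x n + s * y n)) (\<lambda>n. x n + s * y n)) = 0" for s
    using form_real(1)[OF assms(1) xs[of s]] by (metis Im_complex_of_real)
  have ix: "Im (l2_inner (T x) x) = 0" and iy: "Im (l2_inner (T y) y) = 0"
    using form_real(1)[OF assms(1,2)] form_real(1)[OF assms(1,3)] by (metis Im_complex_of_real)+
  have a: "Im (l2_inner (T x) y + l2_inner (T y) x) = 0"
    using i1[of 1] form_expand[OF assms, of 1] ix iy by simp
  have b: "Re (l2_inner (T y) x) - Re (l2_inner (T x) y) = 0"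
    using i1[of "\<i>"] form_expand[OF assms, of "\<i>"] ix iy by simp
  show ?thesis using a b by (simp add: complex_eq_iff)
qed


lemma quad_disc:
  fixes a q c :: real
  assumes "\<And>t. 0 \<le> a - 2 * t * q + t\<^sup>2 * q * c" "0 \<le> q" "0 \<le> c" "0 \<le> a"
  shows "q \<le> a * c"
proof (cases "c = 0")
  case True
  show ?thesis
  proof (rule ccontr)
    assume "\<not> q \<le> a * c"
    hence q: "q > 0" using True by simp
    have "0 \<le> a - 2 * ((a+1)/(2*q)) * q" using assms(1)[of "(a+1)/(2*q)"] True by simp
    also have "\<dots> = -1" using q by (simp add: field_simps)
    finally show False by simp
  qed
next
  case False
  hence c: "c > 0" using assms by simp
  have "0 \<le> a - 2 * (1/c) * q + (1/c)\<^sup>2 * q * c" by (rule assms(1))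
  also have "\<dots> = a - q / c" using c by (simp add: field_simps power2_eq_square)
  finally show ?thesis using c by (simp add: field_simps)
qed

lemma form_cs:
  assumes "lin_pos T" "x \<in> l2" "y \<in> l2"
  shows "(cmod (l2_inner (T x) y))\<^sup>2 \<le> Re (l2_inner (T x) x) * Re (l2_inner (T y) y)"
proof -
  define b where "b = l2_inner (T x) y"
  define a where "a = Re (l2_inner (T x) x)"
  define c where "c = Re (l2_inner (T y) y)"
  define q where "q = (cmod b)\<^sup>2"
  have bx: "l2_inner (T x) x = of_real a" unfolding a_def using form_real[OF assms(1,2)] by simp
  have by': "l2_inner (T y) y = of_real c" unfolding c_def using form_real[OF assms(1,3)] by simp
  have h: "l2_inner (T y) x = cnj b" unfolding b_def using form_herm[OF assms] .
  have bb: "b * cnj b = of_real q" unfolding q_def by (rule complex_norm_square[symmetric])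
  show ?thesis unfolding b_def[symmetric] a_def[symmetric] c_def[symmetric] q_def[symmetric]
  proof (rule quad_disc)
    fix t :: real
    define s where "s = - of_real t * b"
    have xs: "(\<lambda>n. x n + s * y n) \<in> l2" using assms by (intro l2_add l2_scale)
    have "0 \<le> Re (l2_inner (T (\<lambda>n. x n + s * y n)) (\<lambda>n. x n + s * y n))"
      using form_real(2)[OF assms(1) xs] .
    also have "l2_inner (T (\<lambda>n. x n + s * y n)) (\<lambda>n. x n + s * y n)
        = of_real a + cnj s * b + s * cnj b + s * cnj s * of_real c"
      using form_expand[OF assms, of s] bx by' h b_def by simp
    also have "\<dots> = of_real a - 2 * of_real t * (b * cnj b) + (of_real t)\<^sup>2 * (b * cnj b) * of_real c"
      unfolding s_def by (simp add: algebra_simps power2_eq_square)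
    also have "\<dots> = of_real (a - 2 * t * q + t\<^sup>2 * q * c)" unfolding bb by simp
    finally show "0 \<le> a - 2 * t * q + t\<^sup>2 * q * c" by simp
  next
    show "0 \<le> q" unfolding q_def by simp
    show "0 \<le> c" unfolding c_def using form_real[OF assms(1,3)] by simp
    show "0 \<le> a" unfolding a_def using form_real[OF assms(1,2)] by simp
  qed
qed

lemma ip_cs:
  assumes "x \<in> l2" "y \<in> l2"
  shows "(cmod (l2_inner x y))\<^sup>2 \<le> Re (l2_inner x x) * Re (l2_inner y y)"
  using form_cs[OF lin_pos_id assms] by simp


lemma on_l2: "l2_orthonormal v \<Longrightarrow> v k \<in> l2" unfolding l2_orthonormal_def by auto

lemma vsum_l2:
  assumes "l2_orthonormal v" "finite A"
  shows "(\<lambda>n. \<Sum>k\<in>A. c k * v k n) \<in> l2"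
  using assms by (intro l2_sum l2_scale on_l2)

lemma ip_vsum_right:
  assumes "l2_orthonormal v" "finite A" "b \<in> l2"
  shows "l2_inner b (\<lambda>n. \<Sum>k\<in>A. c k * v k n) = (\<Sum>k\<in>A. cnj (c k) * l2_inner b (v k))"
  using assms by (simp add: ip_sum_right l2_scale on_l2 ip_scale_right)

lemma ip_vsum_left:
  assumes "l2_orthonormal v" "finite A" "b \<in> l2"
  shows "l2_inner (\<lambda>n. \<Sum>k\<in>A. c k * v k n) b = (\<Sum>k\<in>A. c k * l2_inner (v k) b)"
  using assms by (simp add: ip_sum_left l2_scale on_l2 ip_scale_left)

lemma ip_vsum_self:
  assumes "l2_orthonormal v" "finite A"
  shows "l2_inner (\<lambda>n. \<Sum>k\<in>A. c k * v k n) (\<lambda>n. \<Sum>k\<in>A. c k * v k n)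
     = of_real (\<Sum>k\<in>A. (cmod (c k))\<^sup>2)"
proof -
  have "l2_inner (\<lambda>n. \<Sum>k\<in>A. c k * v k n) (\<lambda>n. \<Sum>k\<in>A. c k * v k n)
     = (\<Sum>j\<in>A. c j * (\<Sum>k\<in>A. cnj (c k) * l2_inner (v j) (v k)))"
    using assms by (simp add: ip_vsum_left vsum_l2 ip_vsum_right on_l2)
  also have "\<dots> = (\<Sum>j\<in>A. c j * cnj (c j))"
    using assms(1) unfolding l2_orthonormal_def
    by (simp add: if_distrib[where f="\<lambda>z. cnj (c _) * z"] cong: if_cong) (simp add: assms(2))
  also have "\<dots> = of_real (\<Sum>k\<in>A. (cmod (c k))\<^sup>2)"
    by (simp only: of_real_sum complex_norm_square)
  finally show ?thesis .
qed

lemma bessel: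
  assumes "l2_orthonormal v" "finite A" "b \<in> l2"
  shows "(\<Sum>k\<in>A. (cmod (l2_inner b (v k)))\<^sup>2) \<le> Re (l2_inner b b)"
proof -
  define c where "c k = l2_inner b (v k)" for k
  define w where "w = (\<lambda>n. \<Sum>k\<in>A. c k * v k n)"
  have w: "w \<in> l2" unfolding w_def using assms by (intro vsum_l2)
  define S where "S = (\<Sum>k\<in>A. (cmod (c k))\<^sup>2)"
  have ww: "l2_inner w w = of_real S" unfolding w_def S_def using ip_vsum_self[OF assms(1,2)] .
  have "l2_inner b w = (\<Sum>k\<in>A. c k * cnj (c k))" unfolding w_def using assms
    by (simp add: ip_vsum_right c_def[symmetric] mult.commute)
  hence bw: "l2_inner b w = of_real S" unfolding S_def
    by (simp only: of_real_sum complex_norm_square)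
  have wb: "l2_inner w b = of_real S" using ip_cnj[OF assms(3) w] bw by simp
  have "0 \<le> Re (l2_inner (\<lambda>n. b n - w n) (\<lambda>n. b n - w n))"
    using ip_self_nonneg(1)[OF l2_diff[OF assms(3) w]] .
  also have "l2_inner (\<lambda>n. b n - w n) (\<lambda>n. b n - w n) = l2_inner b b - of_real S"
    using assms(3) w by (simp add: ip_diff_left ip_diff_right l2_diff ww bw wb)
  finally show ?thesis unfolding S_def c_def by simp
qed


lemma bessel_summable:
  assumes "l2_orthonormal v" "b \<in> l2"
  shows "summable (\<lambda>k. (cmod (l2_inner b (v k)))\<^sup>2)"
    "(\<Sum>k. (cmod (l2_inner b (v k)))\<^sup>2) \<le> Re (l2_inner b b)"
proof -
  have le: "(\<Sum>k<n. (cmod (l2_inner b (v k)))\<^sup>2) \<le> Re (l2_inner b b)" for n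
    using bessel[OF assms(1) _ assms(2)] by simp
  show s: "summable (\<lambda>k. (cmod (l2_inner b (v k)))\<^sup>2)"
    by (rule summableI_nonneg_bounded[OF _ le]) simp
  show "(\<Sum>k. (cmod (l2_inner b (v k)))\<^sup>2) \<le> Re (l2_inner b b)"
    by (rule suminf_le_const[OF s le])
qed

lemma bessel_zero:
  assumes "l2_orthonormal v" "b \<in> l2"
  shows "(\<lambda>k. l2_inner b (v k)) \<longlonglongrightarrow> 0"
proof -
  have "(\<lambda>k. (cmod (l2_inner b (v k)))\<^sup>2) \<longlonglongrightarrow> 0"
    using bessel_summable(1)[OF assms] by (rule summable_LIMSEQ_zero)
  hence "(\<lambda>k. sqrt ((cmod (l2_inner b (v k)))\<^sup>2)) \<longlonglongrightarrow> sqrt 0"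
    by (rule tendsto_real_sqrt)
  hence "(\<lambda>k. norm (l2_inner b (v k))) \<longlonglongrightarrow> 0" by simp
  thus ?thesis by (rule tendsto_norm_zero_cancel)
qed

definition ebas :: "nat \<Rightarrow> nat \<Rightarrow> complex" where
  "ebas n = (\<lambda>m. if m = n then 1 else 0)"

lemma ebas_l2: "ebas n \<in> l2"
proof -
  have "(\<lambda>m. if m = n then (1::real) else 0) sums 1"
    using sums_single[of n "\<lambda>_. 1::real"] by simp
  moreover have "(\<lambda>m. (cmod (ebas n m))\<^sup>2) = (\<lambda>m. if m = n then (1::real) else 0)"
    by (auto simp: ebas_def)
  ultimately show ?thesis unfolding l2_def by (auto simp: sums_iff)
qed

lemma ip_ebas: "l2_inner (ebas n) v = cnj (v n)"
proof -
  have "(\<lambda>m. if m = n then cnj (v m) else 0) sums cnj (v n)"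
    by (rule sums_single)
  moreover have "(\<lambda>m. ebas n m * cnj (v m)) = (\<lambda>m. if m = n then cnj (v m) else 0)"
    by (auto simp: ebas_def)
  ultimately show ?thesis unfolding l2_inner_def by (simp add: sums_iff)
qed

lemma coord_summable:
  assumes "l2_orthonormal v"
  shows "summable (\<lambda>k. (cmod (v k n))\<^sup>2)"
  using bessel_summable(1)[OF assms ebas_l2[of n]] by (simp add: ip_ebas)

lemma l2_sq_summable: "w \<in> l2 \<Longrightarrow> summable (\<lambda>n. (cmod (w n))\<^sup>2)" by (simp add: l2_def)

lemma re_ip_self: "w \<in> l2 \<Longrightarrow> Re (l2_inner w w) = (\<Sum>n. (cmod (w n))\<^sup>2)"
  by (simp add: ip_self)


lemma parseval:
  assumes onb: "l2_onb u" and a: "a \<in> l2" and b: "b \<in> l2"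
  shows "(\<lambda>L. \<Sum>k<L. l2_inner a (u k) * cnj (l2_inner b (u k))) \<longlonglongrightarrow> l2_inner a b"
proof -
  have on: "l2_orthonormal u" using onb unfolding l2_onb_def by simp
  define c where "c k = l2_inner b (u k)" for k
  define yM where "yM M = (\<lambda>n. \<Sum>k<M. c k * u k n)" for M
  define y where "y n = (\<Sum>k. c k * u k n)" for n
  define tot where "tot = (\<Sum>k. (cmod (c k))\<^sup>2)"
  define t where "t L = tot - (\<Sum>k<L. (cmod (c k))\<^sup>2)" for L
  have csum: "summable (\<lambda>k. (cmod (c k))\<^sup>2)"
    unfolding c_def by (rule bessel_summable(1)[OF on b])
  have t0: "t \<longlonglongrightarrow> 0"
  proof -
    have "(\<lambda>L. \<Sum>k<L. (cmod (c k))\<^sup>2) \<longlonglongrightarrow> tot"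
      unfolding tot_def using csum by (rule summable_LIMSEQ)
    hence "(\<lambda>L. tot - (\<Sum>k<L. (cmod (c k))\<^sup>2)) \<longlonglongrightarrow> tot - tot"
      by (intro tendsto_diff tendsto_const)
    thus ?thesis unfolding t_def by simp
  qed
  have yMl2: "yM M \<in> l2" for M unfolding yM_def using on by (intro vsum_l2) auto
  have ysum: "summable (\<lambda>k. c k * u k n)" for n
    by (rule summable_norm_cancel, rule sq_prod_summable[OF csum coord_summable[OF on]])
  have yconv: "(\<lambda>M. yM M n) \<longlonglongrightarrow> y n" for n
    unfolding yM_def y_def using ysum[of n] by (rule summable_LIMSEQ)
  have step1: "(\<Sum>n. (cmod (yM M n - yM L n))\<^sup>2) \<le> t L" if "L \<le> M" for L M
  proof -
    have eq: "(\<lambda>n. yM M n - yM L n) = (\<lambda>n. \<Sum>k\<in>{L..<M}. c k * u k n)"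
    proof
      fix n
      have "{..<M} = {..<L} \<union> {L..<M}" using that by auto
      hence "(\<Sum>k<M. c k * u k n) = (\<Sum>k<L. c k * u k n) + (\<Sum>k\<in>{L..<M}. c k * u k n)"
        by (simp add: sum.union_disjoint ivl_disj_int)
      thus "yM M n - yM L n = (\<Sum>k\<in>{L..<M}. c k * u k n)" unfolding yM_def by simp
    qed
    have "(\<Sum>n. (cmod (yM M n - yM L n))\<^sup>2) = Re (l2_inner (\<lambda>n. yM M n - yM L n) (\<lambda>n. yM M n - yM L n))"
      using re_ip_self[OF l2_diff[OF yMl2 yMl2]] by simp
    also have "\<dots> = (\<Sum>k\<in>{L..<M}. (cmod (c k))\<^sup>2)"
      unfolding eq using ip_vsum_self[OF on, of "{L..<M}" c] by simp
    also have "\<dots> \<le> t L"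
    proof -
      have "{..<M} = {..<L} \<union> {L..<M}" using that by auto
      hence "(\<Sum>k<M. (cmod (c k))\<^sup>2) = (\<Sum>k<L. (cmod (c k))\<^sup>2) + (\<Sum>k\<in>{L..<M}. (cmod (c k))\<^sup>2)"
        by (simp add: sum.union_disjoint ivl_disj_int)
      moreover have "(\<Sum>k<M. (cmod (c k))\<^sup>2) \<le> tot"
        unfolding tot_def using csum by (intro sum_le_suminf) auto
      ultimately show ?thesis unfolding t_def by simp
    qed
    finally show ?thesis .
  qed
  have step3: "(\<lambda>n. y n - yM L n) \<in> l2 \<and> Re (l2_inner (\<lambda>n. y n - yM L n) (\<lambda>n. y n - yM L n)) \<le> t L" for L
  proof -
    have part: "(\<Sum>n<P. (cmod (y n - yM L n))\<^sup>2) \<le> t L" for P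
    proof -
      have "(\<lambda>M. \<Sum>n<P. (cmod (yM M n - yM L n))\<^sup>2) \<longlonglongrightarrow> (\<Sum>n<P. (cmod (y n - yM L n))\<^sup>2)"
        by (intro tendsto_intros yconv)
      moreover have "\<exists>N. \<forall>M\<ge>N. (\<Sum>n<P. (cmod (yM M n - yM L n))\<^sup>2) \<le> t L"
      proof (intro exI allI impI)
        fix M assume "L \<le> M"
        have "(\<Sum>n<P. (cmod (yM M n - yM L n))\<^sup>2) \<le> (\<Sum>n. (cmod (yM M n - yM L n))\<^sup>2)"
          using l2_sq_summable[OF l2_diff[OF yMl2 yMl2]] by (intro sum_le_suminf) auto
        also have "\<dots> \<le> t L" using step1[OF \<open>L \<le> M\<close>] .
        finally show "(\<Sum>n<P. (cmod (yM M n - yM L n))\<^sup>2) \<le> t L" .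
      qed
      ultimately show ?thesis by (rule LIMSEQ_le_const2)
    qed
    have sm: "summable (\<lambda>n. (cmod (y n - yM L n))\<^sup>2)"
      by (rule summableI_nonneg_bounded[OF _ part]) simp
    hence l: "(\<lambda>n. y n - yM L n) \<in> l2" unfolding l2_def by simp
    moreover have "(\<Sum>n. (cmod (y n - yM L n))\<^sup>2) \<le> t L" by (rule suminf_le_const[OF sm part])
    ultimately show ?thesis using re_ip_self[OF l] by simp
  qed
  have yl2: "y \<in> l2"
  proof -
    have "(\<lambda>n. y n - yM 0 n) \<in> l2" using step3 by blast
    moreover have "(\<lambda>n. y n - yM 0 n) = y" unfolding yM_def by simp
    ultimately show ?thesis by simp
  qed
  have yc: "l2_inner y (u j) = c j" for j
  proof -
    have bound: "(cmod (l2_inner y (u j) - c j))\<^sup>2 \<le> t L" if "j < L" for L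
    proof -
      define w where "w = (\<lambda>n. y n - yM L n)"
      have wl: "w \<in> l2" and wn: "Re (l2_inner w w) \<le> t L" using step3[of L] unfolding w_def by auto
      have uj: "u j \<in> l2" using on by (rule on_l2)
      have "y = (\<lambda>n. w n + yM L n)" unfolding w_def by simp
      hence "l2_inner y (u j) = l2_inner w (u j) + l2_inner (yM L) (u j)"
        using ip_add_left[OF wl yMl2 uj] by simp
      moreover have "l2_inner (yM L) (u j) = c j"
      proof -
        have "l2_inner (yM L) (u j) = (\<Sum>k<L. c k * l2_inner (u k) (u j))"
          unfolding yM_def using on uj by (simp add: ip_vsum_left)
        also have "\<dots> = (\<Sum>k<L. if k = j then c k else 0)"
          using on unfolding l2_orthonormal_def by (intro sum.cong) auto
        also have "\<dots> = c j" using that by simp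
        finally show ?thesis .
      qed
      ultimately have "l2_inner y (u j) - c j = l2_inner w (u j)" by simp
      moreover have "(cmod (l2_inner w (u j)))\<^sup>2 \<le> Re (l2_inner w w) * Re (l2_inner (u j) (u j))"
        using ip_cs[OF wl uj] .
      moreover have "l2_inner (u j) (u j) = 1" using on unfolding l2_orthonormal_def by simp
      ultimately show ?thesis using wn by simp
    qed
    have "(cmod (l2_inner y (u j) - c j))\<^sup>2 \<le> 0"
      using t0 by (rule LIMSEQ_le_const) (use bound in \<open>auto intro!: exI[of _ "Suc j"]\<close>)
    thus ?thesis by simp
  qed
  have by_: "b = y"
  proof -
    have d: "(\<lambda>n. b n - y n) \<in> l2" using b yl2 by (rule l2_diff)
    have "\<forall>k. l2_inner (\<lambda>n. b n - y n) (u k) = 0"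
      using b yl2 on_l2[OF on] by (simp add: ip_diff_left yc c_def)
    hence "(\<lambda>n. b n - y n) = (\<lambda>n. 0)" using onb d unfolding l2_onb_def by blast
    thus ?thesis by (metis eq_iff_diff_eq_0 ext)
  qed
  have "(\<lambda>L. l2_inner a b - (\<Sum>k<L. l2_inner a (u k) * cnj (c k))) \<longlonglongrightarrow> 0"
  proof (rule Lim_null_comparison)
    show "(\<lambda>L. sqrt (Re (l2_inner a a) * t L)) \<longlonglongrightarrow> 0"
      using tendsto_real_sqrt[OF tendsto_mult[OF tendsto_const t0, of "Re (l2_inner a a)"]] by simp
    show "\<forall>\<^sub>F L in sequentially. norm (l2_inner a b - (\<Sum>k<L. l2_inner a (u k) * cnj (c k)))
           \<le> sqrt (Re (l2_inner a a) * t L)"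
    proof (rule always_eventually, rule allI)
      fix L
      define w where "w = (\<lambda>n. y n - yM L n)"
      have wl: "w \<in> l2" and wn: "Re (l2_inner w w) \<le> t L" using step3[of L] unfolding w_def by auto
      have "l2_inner a (yM L) = (\<Sum>k<L. cnj (c k) * l2_inner a (u k))"
        unfolding yM_def using on a by (simp add: ip_vsum_right)
      hence "l2_inner a b - (\<Sum>k<L. l2_inner a (u k) * cnj (c k)) = l2_inner a w"
        unfolding w_def by_ using ip_diff_right[OF yl2 yMl2 a] by (simp add: mult.commute)
      moreover have "(cmod (l2_inner a w))\<^sup>2 \<le> Re (l2_inner a a) * t L"
        using ip_cs[OF a wl] wn ip_self_nonneg(1)[OF a] by (meson mult_left_mono order_trans)
      ultimately show "norm (l2_inner a b - (\<Sum>k<L. l2_inner a (u k) * cnj (c k))) \<le> sqrt (Re (l2_inner a a) * t L)"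
        by (simp add: real_le_rsqrt)
    qed
  qed
  hence "(\<lambda>L. l2_inner a b - (l2_inner a b - (\<Sum>k<L. l2_inner a (u k) * cnj (c k)))) \<longlonglongrightarrow> l2_inner a b - 0"
    by (intro tendsto_diff tendsto_const)
  thus ?thesis unfolding c_def by simp
qed


lemma amgm_aux:
  fixes p q X d :: real
  assumes "0 \<le> p" "0 \<le> q" "0 < d" "p\<^sup>2 \<le> X"
  shows "p * q \<le> X / (2*d) + d / 2 * q\<^sup>2"
proof -
  have "0 \<le> (p - d * q)\<^sup>2" by simp
  hence "2 * d * (p * q) \<le> p\<^sup>2 + d\<^sup>2 * q\<^sup>2" by (simp add: power2_eq_square algebra_simps)
  also have "\<dots> \<le> X + d\<^sup>2 * q\<^sup>2" using assms(4) by simp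
  finally have "2 * d * (p * q) \<le> X + d\<^sup>2 * q\<^sup>2" .
  hence "p * q \<le> (X + d\<^sup>2 * q\<^sup>2) / (2 * d)" using assms(3) by (simp add: field_simps)
  also have "\<dots> = X / (2*d) + d / 2 * q\<^sup>2" using assms(3) by (simp add: field_simps power2_eq_square)
  finally show ?thesis .
qed

lemma tail_le:
  fixes f :: "nat \<Rightarrow> real"
  assumes "summable f" "\<And>k. 0 \<le> f k" "N \<le> M"
  shows "(\<Sum>k\<in>{N..<M}. f k) \<le> suminf f - (\<Sum>k<N. f k)"
proof -
  have "{..<M} = {..<N} \<union> {N..<M}" using assms(3) by auto
  hence "(\<Sum>k<M. f k) = (\<Sum>k<N. f k) + (\<Sum>k\<in>{N..<M}. f k)"
    by (simp add: sum.union_disjoint ivl_disj_int)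
  moreover have "(\<Sum>k<M. f k) \<le> suminf f" using assms by (intro sum_le_suminf) auto
  ultimately show ?thesis by simp
qed

lemma no_trace:
  assumes LT: "lin_pos T" and onb: "l2_onb u"
    and d: "\<And>k. l2_inner (T (u k)) (u k) = of_real (lam k)"
    and lnn: "\<And>k. 0 \<le> lam k" and sl: "summable lam"
    and xo: "l2_orthonormal x" and xl: "(\<lambda>n. l2_inner (T (x n)) (x n)) \<longlonglongrightarrow> of_real mu"
    and mu: "0 < mu"
  shows False
proof -
  have on: "l2_orthonormal u" using onb unfolding l2_onb_def by simp
  define p where "p n = l2_inner (T (x n)) (x n)" for n
  have "Bseq p" unfolding p_def using xl by (intro convergent_imp_Bseq) (auto simp: convergent_def)
  then obtain K where K: "0 < K" "\<And>n. cmod (p n) \<le> K" by (auto elim: BseqE)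
  have xl2: "x n \<in> l2" for n using xo by (rule on_l2)
  have ul2: "u k \<in> l2" for k using on by (rule on_l2)
  have Txl2: "T (x n) \<in> l2" for n using LT xl2 unfolding lin_pos_def by auto
  have rep: "0 \<le> Re (p n)" for n unfolding p_def using form_real(2)[OF LT xl2] .
  have repK: "Re (p n) \<le> K" for n using K(2)[of n] abs_Re_le_cmod[of "p n"] by simp
  have trm: "(cmod (l2_inner (T (x n)) (u k)))\<^sup>2 \<le> K * lam k" for n k
  proof -
    have "(cmod (l2_inner (T (x n)) (u k)))\<^sup>2 \<le> Re (p n) * Re (l2_inner (T (u k)) (u k))"
      unfolding p_def by (rule form_cs[OF LT xl2 ul2])
    also have "\<dots> = Re (p n) * lam k" using d by simp
    also have "\<dots> \<le> K * lam k" using repK lnn by (simp add: mult_right_mono)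
    finally show ?thesis .
  qed
  define dl where "dl = mu / 4"
  have dl: "0 < dl" unfolding dl_def using mu by simp
  define tail where "tail N = suminf lam - (\<Sum>k<N. lam k)" for N
  have "tail \<longlonglongrightarrow> suminf lam - suminf lam"
    unfolding tail_def by (intro tendsto_diff tendsto_const summable_LIMSEQ[OF sl])
  hence "tail \<longlonglongrightarrow> 0" by simp
  hence "eventually (\<lambda>N. tail N < mu / 8 * (2 * dl) / K) sequentially"
    using mu dl K by (intro order_tendstoD(2)) auto
  then obtain N where N: "tail N < mu / 8 * (2 * dl) / K" by (auto simp: eventually_sequentially)
  hence NK: "K * tail N / (2 * dl) < mu / 8" using K dl by (simp add: field_simps)
  define c where "c n k = l2_inner (x n) (u k)" for n k
  have c0: "(\<lambda>n. c n k) \<longlonglongrightarrow> 0" for k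
  proof -
    have "(\<lambda>n. l2_inner (u k) (x n)) \<longlonglongrightarrow> 0" by (rule bessel_zero[OF xo ul2])
    hence "(\<lambda>n. cnj (l2_inner (u k) (x n))) \<longlonglongrightarrow> cnj 0" by (rule tendsto_cnj)
    thus ?thesis unfolding c_def using ip_cnj[OF ul2 xl2] by simp
  qed
  define H where "H n = (\<Sum>k<N. sqrt (K * lam k) * cmod (c n k))" for n
  have "H \<longlonglongrightarrow> (\<Sum>k<N. sqrt (K * lam k) * cmod 0)"
    unfolding H_def by (intro tendsto_intros c0)
  hence H0: "H \<longlonglongrightarrow> 0" by simp
  have ev1: "eventually (\<lambda>n. H n < mu / 8) sequentially"
    using H0 mu by (intro order_tendstoD(2)) auto
  have "(\<lambda>n. Re (p n)) \<longlonglongrightarrow> Re (of_real mu)" unfolding p_def by (intro tendsto_Re xl)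
  hence ev2: "eventually (\<lambda>n. 3 * mu / 4 < Re (p n)) sequentially"
    using mu by (intro order_tendstoD(1)) auto
  obtain n where h1: "H n < mu / 8" and h2: "3 * mu / 4 < Re (p n)"
    using eventually_conj[OF ev1 ev2] by (auto simp: eventually_sequentially)
  define S where "S M = (\<Sum>k<M. l2_inner (T (x n)) (u k) * cnj (c n k))" for M
  have Sl: "S \<longlonglongrightarrow> p n" unfolding S_def c_def p_def by (rule parseval[OF onb Txl2 xl2])
  have "norm (p n) \<le> H n + K * tail N / (2 * dl) + dl / 2"
  proof (rule LIMSEQ_le_const2[OF tendsto_norm[OF Sl]], intro exI allI impI)
    fix M assume NM: "N \<le> M"
    define g where "g k = cmod (l2_inner (T (x n)) (u k)) * cmod (c n k)" for k
    have "norm (S M) \<le> (\<Sum>k<M. g k)"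
      unfolding S_def g_def by (rule order_trans[OF norm_sum]) (simp add: norm_mult)
    also have "{..<M} = {..<N} \<union> {N..<M}" using NM by auto
    hence "(\<Sum>k<M. g k) = (\<Sum>k<N. g k) + (\<Sum>k\<in>{N..<M}. g k)"
      by (simp add: sum.union_disjoint ivl_disj_int)
    also have "(\<Sum>k<N. g k) \<le> H n"
      unfolding H_def g_def
    proof (rule sum_mono)
      fix k
      have "cmod (l2_inner (T (x n)) (u k)) \<le> sqrt (K * lam k)"
        using trm by (rule real_le_rsqrt)
      thus "cmod (l2_inner (T (x n)) (u k)) * cmod (c n k) \<le> sqrt (K * lam k) * cmod (c n k)"
        by (rule mult_right_mono) simp
    qed
    also have "(\<Sum>k\<in>{N..<M}. g k) \<le> (\<Sum>k\<in>{N..<M}. K * lam k / (2 * dl) + dl / 2 * (cmod (c n k))\<^sup>2)"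
      unfolding g_def by (rule sum_mono, rule amgm_aux) (use dl trm in auto)
    also have "\<dots> = K / (2 * dl) * (\<Sum>k\<in>{N..<M}. lam k) + dl / 2 * (\<Sum>k\<in>{N..<M}. (cmod (c n k))\<^sup>2)"
      by (simp add: sum.distrib sum_distrib_left sum_divide_distrib)
    also have "\<dots> \<le> K / (2 * dl) * tail N + dl / 2 * 1"
    proof (rule add_mono)
      show "K / (2 * dl) * (\<Sum>k\<in>{N..<M}. lam k) \<le> K / (2 * dl) * tail N"
        unfolding tail_def using K dl tail_le[OF sl lnn NM] by (intro mult_left_mono) auto
      have "(\<Sum>k\<in>{N..<M}. (cmod (c n k))\<^sup>2) \<le> Re (l2_inner (x n) (x n))"
        unfolding c_def by (rule bessel[OF on _ xl2]) simp
      also have "\<dots> = 1" using xo unfolding l2_orthonormal_def by simp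
      finally show "dl / 2 * (\<Sum>k\<in>{N..<M}. (cmod (c n k))\<^sup>2) \<le> dl / 2 * 1"
        using dl by (intro mult_left_mono) auto
    qed
    finally show "norm (S M) \<le> H n + K * tail N / (2 * dl) + dl / 2" by simp
  qed
  moreover have "Re (p n) \<le> norm (p n)" by (rule complex_Re_le_cmod)
  moreover have "dl / 2 = mu / 8" unfolding dl_def by simp
  ultimately show False using h1 h2 NK mu by linarith
qed


theorem proposition4p6:
  fixes T :: "(nat \<Rightarrow> complex) \<Rightarrow> (nat \<Rightarrow> complex)"
    and lam :: "nat \<Rightarrow> real"
  assumes "bounded_op T"
    and "positive_op T"
    and "\<And>k. lam k \<in> interior {r::real. complex_of_real r \<in> ess_num_range T}"
    and "(\<lambda>k. complex_of_real (lam k)) \<in> diagonals T"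
  shows "filterlim (\<lambda>n. \<Sum>k<n. lam k) at_top sequentially"
proof -
  have LT: "lin_pos T" using assms(1,2) by (rule lin_pos_T)
  define W where "W = {r::real. complex_of_real r \<in> ess_num_range T}"
  have Wnn: "0 \<le> r" if rW: "r \<in> W" for r
  proof -
    obtain x where xo: "l2_orthonormal x" and xl: "(\<lambda>k. l2_inner (T (x k)) (x k)) \<longlonglongrightarrow> of_real r"
      using rW unfolding W_def ess_num_range_def by auto
    have "(\<lambda>k. Re (l2_inner (T (x k)) (x k))) \<longlonglongrightarrow> Re (of_real r)" by (intro tendsto_Re xl)
    hence "0 \<le> Re (complex_of_real r)"
      by (rule LIMSEQ_le_const) (use form_real(2)[OF LT on_l2[OF xo]] in auto)
    thus ?thesis by simp
  qed
  have pos: "0 < lam k" "lam k \<in> W" for k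
  proof -
    have i: "lam k \<in> interior W" using assms(3) unfolding W_def .
    then obtain e where e: "e > 0" "ball (lam k) e \<subseteq> W" by (auto simp: mem_interior)
    have "lam k - e/2 \<in> ball (lam k) e" using e by (simp add: dist_real_def)
    hence "0 \<le> lam k - e/2" using e Wnn by blast
    thus "0 < lam k" using e by simp
    show "lam k \<in> W" using i interior_subset by blast
  qed
  obtain u where onb: "l2_onb u" and dg: "(\<lambda>k. complex_of_real (lam k)) = (\<lambda>k. l2_inner (T (u k)) (u k))"
    using assms(4) unfolding diagonals_def by auto
  have d: "l2_inner (T (u k)) (u k) = of_real (lam k)" for k using fun_cong[OF dg, of k] by simp
  obtain x where xo: "l2_orthonormal x" and xl: "(\<lambda>k. l2_inner (T (x k)) (x k)) \<longlonglongrightarrow> of_real (lam 0)"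
    using pos(2)[of 0] unfolding W_def ess_num_range_def by auto
  have ns: "\<not> summable lam"
    using no_trace[OF LT onb d _ _ xo xl pos(1)[of 0]] pos(1) by (meson less_imp_le)
  show ?thesis unfolding filterlim_at_top
  proof
    fix Z :: real
    have "\<exists>n. Z \<le> (\<Sum>k<n. lam k)"
    proof (rule ccontr)
      assume "\<not> ?thesis"
      hence "\<And>n. (\<Sum>k<n. lam k) \<le> Z" by (simp add: not_le less_imp_le)
      hence "summable lam" by (rule summableI_nonneg_bounded[rotated]) (use pos(1) in \<open>simp add: less_imp_le\<close>)
      with ns show False by simp
    qed
    then obtain n0 where n0: "Z \<le> (\<Sum>k<n0. lam k)" by blast
    show "eventually (\<lambda>n. Z \<le> (\<Sum>k<n. lam k)) sequentially"
      unfolding eventually_sequentially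
    proof (intro exI allI impI)
      fix n assume "n0 \<le> n"
      hence "(\<Sum>k<n0. lam k) \<le> (\<Sum>k<n. lam k)"
        using pos(1) by (intro sum_mono2) (auto simp: less_imp_le)
      thus "Z \<le> (\<Sum>k<n. lam k)" using n0 by simp
    qed
  qed
qed

end
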